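(* Let $A$ be a unital pro-$C^*$-algebra, $H$ a Hilbert space, and $\rho=[\rho_{ij}]_{i,j=1}^n$ a completely $n$-positive linear map from $A$ to $L(H)$. If $\rho_{11},\dots,\rho_{nn}$ are mutually unitarily equivalent pure unital completely positive linear maps from $A$ to $L(H)$, and for all $i,j\in\{1,\dots,n\}$ with $i\ne j$ there is a unitary element $u_{ij}\in A$ such that $\rho_{ij}(u_{ij})=I_H$, then $\rho$ is pure.
   Context: A pro-$C^*$-algebra is a complete Hausdorff topological $*$-algebra over $\mathbb{C}$ whose topology is determined by its continuous $C^*$-seminorms. A representation of $A$ on a Hilbert space $K$ is a continuous $*$-morphism $A\to L(K)$. An $n\times n$ matrix $[\rho_{ij}]$ of continuous linear maps $A\to L(H)$ is completely $n$-positive if the map $M_n(A)\to M_n(L(H))$, $[a_{ij}]\mapsto[\rho_{ij}(a_{ij})]$, is completely positive (for $n=1$ this is an ordinary completely positive map); $\theta\le\rho$ means $\rho-\theta$ is completely $n$-positive. A completely $n$-positive $\rho$ is pure if for every completely $n$-positive $\theta\le\rho$ there is $\alpha\in[0,1]$ with $\theta=\alpha\rho$. Each completely $n$-positive $\rho$ has a Stinespring representation $(\Phi_\rho,H_\rho,V_{\rho,1},\dots,V_{\rho,n})$: $\Phi_\rho$ a representation of $A$ on $H_\rho$, $V_{\rho,i}\in L(H,H_\rho)$, $\rho_{ij}(a)=V_{\rho,i}^*\Phi_\rho(a)V_{\rho,j}$, with $\{\Phi_\rho(a)V_{\rho,i}\xi\}$ spanning a dense subspace; unique up to unitary equivalence.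 Two completely positive maps are unitarily equivalent if their Stinespring representations are unitarily equivalent. A completely positive map $\varphi$ is unital if $\varphi(1)=I_H$. *)

theory Defs
  imports Complex_Main
begin

class cvector = ab_group_add +
  fixes scaleC :: "complex \<Rightarrow> 'a \<Rightarrow> 'a"
  assumes scaleC_add_right: "scaleC c (x + y) = scaleC c x + scaleC c y"
    and scaleC_add_left: "scaleC (c + d) x = scaleC c x + scaleC d x"
    and scaleC_scaleC: "scaleC c (scaleC d x) = scaleC (c * d) x"
    and scaleC_one: "scaleC 1 x = x"

class chilbert = cvector +
  fixes cinner :: "'a \<Rightarrow> 'a \<Rightarrow> complex"
  assumes cinner_add_right: "cinner x (y + z) = cinner x y + cinner x z"
    and cinner_scaleC_right: "cinner x (scaleC c y) = c * cinner x y"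
    and cinner_commute: "cinner y x = cnj (cinner x y)"
    and cinner_nonneg: "0 \<le> Re (cinner x x)"
    and cinner_eq_zero: "cinner x x = 0 \<longleftrightarrow> x = 0"
    and cinner_complete:
      "(\<forall>e>0. \<exists>N::nat. \<forall>m\<ge>N. \<forall>k\<ge>N. sqrt (Re (cinner (X m - X k) (X m - X k))) < e)
        \<Longrightarrow> \<exists>L. \<forall>e>0. \<exists>N::nat. \<forall>k\<ge>N. sqrt (Re (cinner (X k - L) (X k - L))) < e"

class cstar_alg1 = ring_1 + cvector +
  fixes astar :: "'a \<Rightarrow> 'a"
  assumes mult_scaleC_left: "scaleC c x * y = scaleC c (x * y)"
    and mult_scaleC_right: "x * scaleC c y = scaleC c (x * y)"
    and astar_astar: "astar (astar x) = x"
    and astar_add: "astar (x + y) = astar x + astar y"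
    and astar_scaleC: "astar (scaleC c x) = scaleC (cnj c) (astar x)"
    and astar_mult: "astar (x * y) = astar y * astar x"

definition cstar_seminorm :: "('a::cstar_alg1 \<Rightarrow> real) \<Rightarrow> bool" where
  "cstar_seminorm p \<longleftrightarrow>
     (\<forall>x. 0 \<le> p x) \<and>
     (\<forall>x y. p (x + y) \<le> p x + p y) \<and>
     (\<forall>c x. p (scaleC c x) = cmod c * p x) \<and>
     (\<forall>x y. p (x * y) \<le> p x * p y) \<and>
     (\<forall>x. p (astar x * x) = (p x)\<^sup>2)"

text \<open>The topology of the algebra is the one defined by the upward directed
  family P of (continuous) C*-seminorms; it must be Hausdorff and complete
  (completeness expressed with Cauchy filters, equivalent to Cauchy nets).\<close>
definition pro_cstar :: "('a::cstar_alg1 \<Rightarrow> real) set \<Rightarrow> bool" where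
  "pro_cstar P \<longleftrightarrow>
     P \<noteq> {} \<and>
     (\<forall>p\<in>P. cstar_seminorm p) \<and>
     (\<forall>p\<in>P. \<forall>q\<in>P. \<exists>r\<in>P. \<forall>x. max (p x) (q x) \<le> r x) \<and>
     (\<forall>x. (\<forall>p\<in>P. p x = 0) \<longrightarrow> x = 0) \<and>
     (\<forall>F. F \<noteq> bot \<and> (\<forall>p\<in>P. \<forall>e>0. eventually (\<lambda>(x, y). p (x - y) < e) (F \<times>\<^sub>F F))
          \<longrightarrow> (\<exists>x. \<forall>p\<in>P. \<forall>e>0. eventually (\<lambda>y. p (y - x) < e) F))"

definition unitary_elem :: "'a::cstar_alg1 \<Rightarrow> bool" where
  "unitary_elem u \<longleftrightarrow> astar u * u = 1 \<and> u * astar u = 1"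

definition hnorm :: "'h::chilbert \<Rightarrow> real" where
  "hnorm x = sqrt (Re (cinner x x))"

definition bounded_op :: "('h::chilbert \<Rightarrow> 'k::chilbert) \<Rightarrow> bool" where
  "bounded_op T \<longleftrightarrow>
     (\<forall>x y. T (x + y) = T x + T y) \<and> (\<forall>c x. T (scaleC c x) = scaleC c (T x)) \<and>
     (\<exists>C. \<forall>x. hnorm (T x) \<le> C * hnorm x)"

definition adj :: "('h::chilbert \<Rightarrow> 'k::chilbert) \<Rightarrow> ('k \<Rightarrow> 'h)" where
  "adj T = (THE S. \<forall>x y. cinner (T x) y = cinner x (S y))"

definition unitary_op :: "('k::chilbert \<Rightarrow> 'k) \<Rightarrow> bool" where
  "unitary_op U \<longleftrightarrow> bounded_op U \<and> (\<forall>x y. cinner (U x) (U y) = cinner x y) \<and> surj U"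

definition cont_lin_map ::
  "('a::cstar_alg1 \<Rightarrow> real) set \<Rightarrow> ('a \<Rightarrow> 'h::chilbert \<Rightarrow> 'h) \<Rightarrow> bool" where
  "cont_lin_map P \<phi> \<longleftrightarrow>
     (\<forall>a. bounded_op (\<phi> a)) \<and>
     (\<forall>a b. \<phi> (a + b) = (\<lambda>x. \<phi> a x + \<phi> b x)) \<and>
     (\<forall>c a. \<phi> (scaleC c a) = (\<lambda>x. scaleC c (\<phi> a x))) \<and>
     (\<exists>p\<in>P. \<exists>C. \<forall>a x. hnorm (\<phi> a x) \<le> C * p a * hnorm x)"

definition representation ::
  "('a::cstar_alg1 \<Rightarrow> real) set \<Rightarrow> ('a \<Rightarrow> 'k::chilbert \<Rightarrow> 'k) \<Rightarrow> bool" where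
  "representation P \<Phi> \<longleftrightarrow>
     cont_lin_map P \<Phi> \<and>
     (\<forall>a b. \<Phi> (a * b) = \<Phi> a \<circ> \<Phi> b) \<and>
     (\<forall>a. \<Phi> (astar a) = adj (\<Phi> a))"

text \<open>Complete positivity of
  [a_ij] \<mapsto> [\<rho>_ij(a_ij)] on M_n(A): for every m, every positive element
  c = b* b of M_m(M_n(A)) (entries indexed by pairs (s,i), s<m, 1\<le>i\<le>n)
  is mapped to a positive operator on H^(mn).\<close>
definition cnpos ::
  "('a::cstar_alg1 \<Rightarrow> real) set \<Rightarrow> nat \<Rightarrow> (nat \<Rightarrow> nat \<Rightarrow> 'a \<Rightarrow> 'h::chilbert \<Rightarrow> 'h) \<Rightarrow> bool" where
  "cnpos P n \<rho> \<longleftrightarrow>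
     (\<forall>i\<in>{1..n}. \<forall>j\<in>{1..n}. cont_lin_map P (\<rho> i j)) \<and>
     (\<forall>(m::nat) (b::nat \<Rightarrow> nat \<Rightarrow> nat \<Rightarrow> nat \<Rightarrow> 'a) (\<xi>::nat \<Rightarrow> nat \<Rightarrow> 'h).
        let c = (\<lambda>s i t j. \<Sum>r<m. \<Sum>k\<in>{1..n}. astar (b r k s i) * b r k t j);
            z = (\<Sum>s<m. \<Sum>i\<in>{1..n}. \<Sum>t<m. \<Sum>j\<in>{1..n}.
                   cinner (\<xi> s i) (\<rho> i j (c s i t j) (\<xi> t j)))
        in 0 \<le> Re z \<and> Im z = 0)"

definition pure_cnpos ::
  "('a::cstar_alg1 \<Rightarrow> real) set \<Rightarrow> nat \<Rightarrow> (nat \<Rightarrow> nat \<Rightarrow> 'a \<Rightarrow> 'h::chilbert \<Rightarrow> 'h) \<Rightarrow> bool" where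
  "pure_cnpos P n \<rho> \<longleftrightarrow>
     cnpos P n \<rho> \<and>
     (\<forall>\<theta>. cnpos P n \<theta> \<and> cnpos P n (\<lambda>i j a x. \<rho> i j a x - \<theta> i j a x) \<longrightarrow>
        (\<exists>\<alpha>::real. 0 \<le> \<alpha> \<and> \<alpha> \<le> 1 \<and>
           (\<forall>i\<in>{1..n}. \<forall>j\<in>{1..n}. \<forall>a.
              \<theta> i j a = (\<lambda>x. scaleC (complex_of_real \<alpha>) (\<rho> i j a x)))))"

abbreviation cpos where "cpos P \<phi> \<equiv> cnpos P 1 (\<lambda>_ _. \<phi>)"
abbreviation pure_cp where "pure_cp P \<phi> \<equiv> pure_cnpos P 1 (\<lambda>_ _. \<phi>)"

definition stinespring ::
  "('a::cstar_alg1 \<Rightarrow> real) set \<Rightarrow> ('a \<Rightarrow> 'h::chilbert \<Rightarrow> 'h)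
   \<Rightarrow> ('a \<Rightarrow> 'k::chilbert \<Rightarrow> 'k) \<Rightarrow> ('h \<Rightarrow> 'k) \<Rightarrow> bool" where
  "stinespring P \<phi> \<Phi> V \<longleftrightarrow>
     representation P \<Phi> \<and> bounded_op V \<and>
     (\<forall>a. \<phi> a = adj V \<circ> \<Phi> a \<circ> V) \<and>
     (\<forall>y. \<forall>e>0. \<exists>(N::nat) c a \<xi>.
        hnorm (y - (\<Sum>l<N. scaleC (c l) (\<Phi> (a l) (V (\<xi> l))))) < e)"

text \<open>Two completely positive maps are unitarily equivalent if the
  representations of their Stinespring representations are unitarily
  equivalent; the Stinespring Hilbert space is realised on the type 'k.\<close>
definition cp_unit_equiv ::
  "('a::cstar_alg1 \<Rightarrow> real) set \<Rightarrow> 'k::chilbert itself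
   \<Rightarrow> ('a \<Rightarrow> 'h::chilbert \<Rightarrow> 'h) \<Rightarrow> ('a \<Rightarrow> 'h \<Rightarrow> 'h) \<Rightarrow> bool" where
  "cp_unit_equiv P K \<phi> \<psi> \<longleftrightarrow>
     (\<exists>(\<Phi>1::'a \<Rightarrow> 'k \<Rightarrow> 'k) V1 (\<Phi>2::'a \<Rightarrow> 'k \<Rightarrow> 'k) V2 U.
        stinespring P \<phi> \<Phi>1 V1 \<and> stinespring P \<psi> \<Phi>2 V2 \<and>
        unitary_op U \<and> (\<forall>a. U \<circ> \<Phi>1 a = \<Phi>2 a \<circ> U))"

end

theory Submission
  imports Defs
begin

lemma scaleC_zero_right[simp]: "scaleC c (0::'a::cvector) = 0"
proof -
  have "scaleC c (0::'a) = scaleC c (0 + 0)" by simp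
  also have "\<dots> = scaleC c 0 + scaleC c 0" by (rule scaleC_add_right)
  finally show ?thesis by simp
qed

lemma cinner_zero_right[simp]: "cinner (x::'a::chilbert) 0 = 0"
proof -
  have "cinner x (0::'a) = cinner x (0 + 0)" by simp
  also have "\<dots> = cinner x 0 + cinner x 0" by (rule cinner_add_right)
  finally show ?thesis by simp
qed

lemma cinner_zero_left[simp]: "cinner 0 (x::'a::chilbert) = 0"
  by (subst cinner_commute) simp

lemma cinner_scaleC_left[simp]: "cinner (scaleC c x) (y::'a::chilbert) = cnj c * cinner x y"
  by (subst cinner_commute) (simp add: cinner_scaleC_right cinner_commute[of x y])

lemma cinner_diff_right: "cinner (x::'a::chilbert) (y - z) = cinner x y - cinner x z"
proof -
  have "cinner x y = cinner x ((y - z) + z)" by simp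
  also have "\<dots> = cinner x (y - z) + cinner x z" by (rule cinner_add_right)
  finally show ?thesis by simp
qed

lemma cinner_ext: assumes "\<forall>\<eta>. cinner \<eta> a = cinner \<eta> (b::'a::chilbert)" shows "a = b"
proof -
  have "cinner (a - b) (a - b) = 0" using assms by (simp add: cinner_diff_right)
  then have "a - b = 0" by (simp only: cinner_eq_zero)
  then show ?thesis by simp
qed

lemma astar_zero[simp]: "astar (0::'a::cstar_alg1) = 0"
proof -
  have "astar (0::'a) = astar (0 + 0)" by simp
  also have "\<dots> = astar 0 + astar 0" by (rule astar_add)
  finally show ?thesis by simp
qed

lemma astar_one[simp]: "astar (1::'a::cstar_alg1) = 1"
proof -
  have "astar (astar (1::'a) * 1) = astar 1 * astar (astar 1)" by (rule astar_mult)
  then show ?thesis by (simp add: astar_astar)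
qed

lemma bop_zero: "bounded_op T \<Longrightarrow> T 0 = 0"
proof -
  assume "bounded_op T"
  then have "T (0 + 0) = T 0 + T 0" unfolding bounded_op_def by blast
  then show ?thesis by simp
qed

lemma bop_scale: "bounded_op T \<Longrightarrow> T (scaleC c x) = scaleC c (T x)"
  unfolding bounded_op_def by blast

lemma bop_add: "bounded_op T \<Longrightarrow> T (x + y) = T x + T y"
  unfolding bounded_op_def by blast
definition Qf :: "(nat \<Rightarrow> nat \<Rightarrow> 'a::cstar_alg1 \<Rightarrow> 'h::chilbert \<Rightarrow> 'h) \<Rightarrow> nat \<Rightarrow> (nat \<Rightarrow> nat) \<Rightarrow> (nat \<Rightarrow> 'a) \<Rightarrow> (nat \<Rightarrow> 'h) \<Rightarrow> complex" where
  "Qf \<sigma> N I a \<xi> = (\<Sum>s<N. \<Sum>t<N. cinner (\<xi> s) (\<sigma> (I s) (I t) (astar (a s) * a t) (\<xi> t)))"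

lemma cnpos_bop:
  assumes cp: "cnpos P n \<sigma>" and ij: "i \<in> {1..n}" "j \<in> {1..n}"
  shows "bounded_op (\<sigma> i j x)"
proof -
  have "\<forall>i\<in>{1..n}. \<forall>j\<in>{1..n}. cont_lin_map P (\<sigma> i j)"
    using cp unfolding cnpos_def by (rule conjunct1)
  with ij have "cont_lin_map P (\<sigma> i j)" by blast
  then show "bounded_op (\<sigma> i j x)" unfolding cont_lin_map_def by (rule conjunct1[THEN spec])
qed

lemma gram:
  fixes \<sigma> :: "nat \<Rightarrow> nat \<Rightarrow> 'a::cstar_alg1 \<Rightarrow> 'h::chilbert \<Rightarrow> 'h"
  assumes cp: "cnpos P n \<sigma>" and I: "\<forall>l<(N::nat). I l \<in> {1..n}"
  shows "0 \<le> Re (Qf \<sigma> N I a \<xi>) \<and> Im (Qf \<sigma> N I a \<xi>) = 0"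
proof -
  define b where "b = (\<lambda>(r::nat) (k::nat) s i. if r = 0 \<and> k = 1 \<and> i = I s then a s else 0)"
  define X where "X = (\<lambda>s i. if i = I s then \<xi> s else 0)"
  define c where "c = (\<lambda>s i t j. \<Sum>r<N. \<Sum>k\<in>{1..n}. astar (b r k s i) * b r k t j)"
  have bop: "\<And>i j x. i \<in> {1..n} \<Longrightarrow> j \<in> {1..n} \<Longrightarrow> bounded_op (\<sigma> i j x)"
    using cp cnpos_bop by blast
  have "\<forall>(m::nat) (b::nat \<Rightarrow> nat \<Rightarrow> nat \<Rightarrow> nat \<Rightarrow> 'a) (\<xi>::nat \<Rightarrow> nat \<Rightarrow> 'h).
        let c = (\<lambda>s i t j. \<Sum>r<m. \<Sum>k\<in>{1..n}. astar (b r k s i) * b r k t j);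
            z = (\<Sum>s<m. \<Sum>i\<in>{1..n}. \<Sum>t<m. \<Sum>j\<in>{1..n}.
                   cinner (\<xi> s i) (\<sigma> i j (c s i t j) (\<xi> t j)))
        in 0 \<le> Re z \<and> Im z = 0"
    using cp unfolding cnpos_def by (rule conjunct2)
  from spec[OF spec[OF spec[OF this, of N], of b], of X]
  have pos: "0 \<le> Re (\<Sum>s<N. \<Sum>i\<in>{1..n}. \<Sum>t<N. \<Sum>j\<in>{1..n}.
                   cinner (X s i) (\<sigma> i j (c s i t j) (X t j))) \<and>
             Im (\<Sum>s<N. \<Sum>i\<in>{1..n}. \<Sum>t<N. \<Sum>j\<in>{1..n}.
                   cinner (X s i) (\<sigma> i j (c s i t j) (X t j))) = 0"
    unfolding c_def Let_def .
  have cval: "c s (I s) t (I t) = astar (a s) * a t" if "s < N" "t < N" for s t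
  proof -
    have n1: "1 \<in> {1..n}" using I that by auto
    have "c s (I s) t (I t) = (\<Sum>r<N. \<Sum>k\<in>{1..n}. if r = 0 \<and> k = 1 then astar (a s) * a t else 0)"
      unfolding c_def b_def by (intro sum.cong refl) simp
    also have "\<dots> = (\<Sum>r<N. if r = 0 then astar (a s) * a t else 0)"
    proof (rule sum.cong[OF refl])
      fix r show "(\<Sum>k\<in>{1..n}. if r = 0 \<and> k = 1 then astar (a s) * a t else 0)
           = (if r = 0 then astar (a s) * a t else 0)"
        using n1 by (cases "r = 0") (simp_all add: sum.delta')
    qed
    also have "\<dots> = astar (a s) * a t" using that by (simp add: sum.delta)
    finally show ?thesis .
  qed
  have inner: "(\<Sum>i\<in>{1..n}. \<Sum>j\<in>{1..n}. cinner (X s i) (\<sigma> i j (c s i t j) (X t j)))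
      = cinner (\<xi> s) (\<sigma> (I s) (I t) (astar (a s) * a t) (\<xi> t))" if "s < N" "t < N" for s t
  proof -
    have "(\<Sum>i\<in>{1..n}. \<Sum>j\<in>{1..n}. cinner (X s i) (\<sigma> i j (c s i t j) (X t j)))
      = (\<Sum>i\<in>{1..n}. \<Sum>j\<in>{1..n}. if i = I s \<and> j = I t then
            cinner (\<xi> s) (\<sigma> (I s) (I t) (astar (a s) * a t) (\<xi> t)) else 0)"
    proof (intro sum.cong refl)
      fix i j assume ij: "i \<in> {1..n}" "j \<in> {1..n}"
      show "cinner (X s i) (\<sigma> i j (c s i t j) (X t j)) = (if i = I s \<and> j = I t then
            cinner (\<xi> s) (\<sigma> (I s) (I t) (astar (a s) * a t) (\<xi> t)) else 0)"
      proof (cases "i = I s \<and> j = I t")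
        case True then show ?thesis using cval[OF that] unfolding X_def by simp
      next
        case False then show ?thesis using bop_zero[OF bop[OF ij]] unfolding X_def by auto
      qed
    qed
    also have "\<dots> = (\<Sum>i\<in>{1..n}. if i = I s then
            cinner (\<xi> s) (\<sigma> (I s) (I t) (astar (a s) * a t) (\<xi> t)) else 0)"
      using I that by (intro sum.cong refl) (simp add: sum.delta')
    also have "\<dots> = cinner (\<xi> s) (\<sigma> (I s) (I t) (astar (a s) * a t) (\<xi> t))"
      using I that by (simp add: sum.delta')
    finally show ?thesis .
  qed
  have "(\<Sum>s<N. \<Sum>i\<in>{1..n}. \<Sum>t<N. \<Sum>j\<in>{1..n}. cinner (X s i) (\<sigma> i j (c s i t j) (X t j)))
      = (\<Sum>s<N. \<Sum>t<N. \<Sum>i\<in>{1..n}. \<Sum>j\<in>{1..n}. cinner (X s i) (\<sigma> i j (c s i t j) (X t j)))"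
    by (rule sum.cong[OF refl], rule sum.swap)
  also have "\<dots> = Qf \<sigma> N I a \<xi>" unfolding Qf_def using inner by (intro sum.cong refl) simp
  finally show ?thesis using pos by simp
qed
lemma cnpos_restrict:
  fixes \<sigma> :: "nat \<Rightarrow> nat \<Rightarrow> 'a::cstar_alg1 \<Rightarrow> 'h::chilbert \<Rightarrow> 'h"
  assumes cp: "cnpos P n \<sigma>" and k: "k \<in> {1..n}"
  shows "cnpos P 1 (\<lambda>_ _. \<sigma> k k)"
proof -
  have cl: "\<forall>i\<in>{1..n}. \<forall>j\<in>{1..n}. cont_lin_map P (\<sigma> i j)"
    using cp unfolding cnpos_def by (rule conjunct1)
  have bop: "\<And>i j x. i \<in> {1..n} \<Longrightarrow> j \<in> {1..n} \<Longrightarrow> bounded_op (\<sigma> i j x)"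
    using cp cnpos_bop by blast
  have all: "\<forall>(m::nat) (b::nat \<Rightarrow> nat \<Rightarrow> nat \<Rightarrow> nat \<Rightarrow> 'a) (\<xi>::nat \<Rightarrow> nat \<Rightarrow> 'h).
        let c = (\<lambda>s i t j. \<Sum>r<m. \<Sum>k\<in>{1..n}. astar (b r k s i) * b r k t j);
            z = (\<Sum>s<m. \<Sum>i\<in>{1..n}. \<Sum>t<m. \<Sum>j\<in>{1..n}.
                   cinner (\<xi> s i) (\<sigma> i j (c s i t j) (\<xi> t j)))
        in 0 \<le> Re z \<and> Im z = 0"
    using cp unfolding cnpos_def by (rule conjunct2)
  have n1: "1 \<in> {1..n}" using k by auto
  show ?thesis
    unfolding cnpos_def
  proof (intro conjI allI)
    show "\<forall>i\<in>{1..1}. \<forall>j\<in>{1..1}. cont_lin_map P (\<sigma> k k)" using cl k by blast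
  next
    fix m :: nat and b :: "nat \<Rightarrow> nat \<Rightarrow> nat \<Rightarrow> nat \<Rightarrow> 'a" and \<xi> :: "nat \<Rightarrow> nat \<Rightarrow> 'h"
    define B where "B = (\<lambda>(r::nat) (k'::nat) (s::nat) (i::nat). if k' = 1 \<and> i = k then b r 1 s 1 else 0)"
    define X where "X = (\<lambda>(s::nat) (i::nat). if i = k then \<xi> s 1 else 0)"
    define C where "C = (\<lambda>s i t j. \<Sum>r<m. \<Sum>k\<in>{1..n}. astar (B r k s i) * B r k t j)"
    from spec[OF spec[OF spec[OF all, of m], of B], of X]
    have pos: "0 \<le> Re (\<Sum>s<m. \<Sum>i\<in>{1..n}. \<Sum>t<m. \<Sum>j\<in>{1..n}.
                   cinner (X s i) (\<sigma> i j (C s i t j) (X t j))) \<and>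
             Im (\<Sum>s<m. \<Sum>i\<in>{1..n}. \<Sum>t<m. \<Sum>j\<in>{1..n}.
                   cinner (X s i) (\<sigma> i j (C s i t j) (X t j))) = 0"
      unfolding C_def Let_def .
    have Cv: "C s k t k = (\<Sum>r<m. astar (b r 1 s 1) * b r 1 t 1)" for s t
      unfolding C_def B_def using n1 by (intro sum.cong refl) (simp add: if_distrib sum.delta' cong: if_cong)
    have inner: "(\<Sum>i\<in>{1..n}. \<Sum>t<m. \<Sum>j\<in>{1..n}. cinner (X s i) (\<sigma> i j (C s i t j) (X t j)))
       = (\<Sum>t<m. cinner (\<xi> s 1) (\<sigma> k k (\<Sum>r<m. astar (b r 1 s 1) * b r 1 t 1) (\<xi> t 1)))" for s
    proof -
      have "(\<Sum>i\<in>{1..n}. \<Sum>t<m. \<Sum>j\<in>{1..n}. cinner (X s i) (\<sigma> i j (C s i t j) (X t j)))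
        = (\<Sum>i\<in>{1..n}. if i = k then (\<Sum>t<m. \<Sum>j\<in>{1..n}. if j = k then
             cinner (\<xi> s 1) (\<sigma> k k (\<Sum>r<m. astar (b r 1 s 1) * b r 1 t 1) (\<xi> t 1)) else 0) else 0)"
      proof (intro sum.cong refl)
        fix i assume i: "i \<in> {1..n}"
        show "(\<Sum>t<m. \<Sum>j\<in>{1..n}. cinner (X s i) (\<sigma> i j (C s i t j) (X t j))) =
          (if i = k then (\<Sum>t<m. \<Sum>j\<in>{1..n}. if j = k then
             cinner (\<xi> s 1) (\<sigma> k k (\<Sum>r<m. astar (b r 1 s 1) * b r 1 t 1) (\<xi> t 1)) else 0) else 0)"
        proof (cases "i = k")
          case False then show ?thesis unfolding X_def by simp
        next
          case True
          have "(\<Sum>t<m. \<Sum>j\<in>{1..n}. cinner (X s k) (\<sigma> k j (C s k t j) (X t j))) =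
             (\<Sum>t<m. \<Sum>j\<in>{1..n}. if j = k then
             cinner (\<xi> s 1) (\<sigma> k k (\<Sum>r<m. astar (b r 1 s 1) * b r 1 t 1) (\<xi> t 1)) else 0)"
          proof (intro sum.cong refl)
            fix t j assume j: "j \<in> {1..n}"
            show "cinner (X s k) (\<sigma> k j (C s k t j) (X t j)) = (if j = k then
             cinner (\<xi> s 1) (\<sigma> k k (\<Sum>r<m. astar (b r 1 s 1) * b r 1 t 1) (\<xi> t 1)) else 0)"
              using bop_zero[OF bop[OF k j]] Cv unfolding X_def by auto
          qed
          then show ?thesis using True by simp
        qed
      qed
      also have "\<dots> = (\<Sum>t<m. cinner (\<xi> s 1) (\<sigma> k k (\<Sum>r<m. astar (b r 1 s 1) * b r 1 t 1) (\<xi> t 1)))"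
        using k by (simp add: sum.delta')
      finally show ?thesis .
    qed
    have eq: "(\<Sum>s<m. \<Sum>i\<in>{1..n}. \<Sum>t<m. \<Sum>j\<in>{1..n}.
                   cinner (X s i) (\<sigma> i j (C s i t j) (X t j)))
      = (\<Sum>s<m. \<Sum>i\<in>{1..1}. \<Sum>t<m. \<Sum>j\<in>{1..1}.
                   cinner (\<xi> s i) (\<sigma> k k ((\<lambda>s i t j. \<Sum>r<m. \<Sum>k\<in>{1..1}. astar (b r k s i) * b r k t j) s i t j) (\<xi> t j)))"
      using inner by simp
    show "let c = (\<lambda>s i t j. \<Sum>r<m. \<Sum>k\<in>{1..1}. astar (b r k s i) * b r k t j);
            z = (\<Sum>s<m. \<Sum>i\<in>{1..1}. \<Sum>t<m. \<Sum>j\<in>{1..1}.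
                   cinner (\<xi> s i) ((\<lambda>_ _. \<sigma> k k) i j (c s i t j) (\<xi> t j)))
        in 0 \<le> Re z \<and> Im z = 0"
      unfolding Let_def using pos unfolding eq by simp
  qed
qed
lemma Qf1: "Qf \<sigma> 1 I a \<xi> = cinner (\<xi> 0) (\<sigma> (I 0) (I 0) (astar (a 0) * a 0) (\<xi> 0))"
  unfolding Qf_def by simp

lemma Qf2: "Qf \<sigma> 2 I a \<xi> =
   cinner (\<xi> 0) (\<sigma> (I 0) (I 0) (astar (a 0) * a 0) (\<xi> 0)) +
   cinner (\<xi> 0) (\<sigma> (I 0) (I 1) (astar (a 0) * a 1) (\<xi> 1)) +
   (cinner (\<xi> 1) (\<sigma> (I 1) (I 0) (astar (a 1) * a 0) (\<xi> 0)) +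
   cinner (\<xi> 1) (\<sigma> (I 1) (I 1) (astar (a 1) * a 1) (\<xi> 1)))"
  unfolding Qf_def by (simp add: numeral_2_eq_2 lessThan_Suc algebra_simps)

lemma Qf3: "Qf \<sigma> 3 I a \<xi> =
   (\<Sum>s\<in>{0,1,2::nat}. \<Sum>t\<in>{0,1,2::nat}. cinner (\<xi> s) (\<sigma> (I s) (I t) (astar (a s) * a t) (\<xi> t)))"
proof -
  have "{..<3::nat} = {0,1,2}" by auto
  then show ?thesis unfolding Qf_def by simp
qed

lemma herm:
  fixes \<sigma> :: "nat \<Rightarrow> nat \<Rightarrow> 'a::cstar_alg1 \<Rightarrow> 'h::chilbert \<Rightarrow> 'h"
  assumes cp: "cnpos P n \<sigma>" and ij: "i \<in> {1..n}" "j \<in> {1..n}"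
  shows "cinner \<xi> (\<sigma> i j a \<eta>) = cnj (cinner \<eta> (\<sigma> j i (astar a) \<xi>))"
proof -
  define G where "G = cinner \<xi> (\<sigma> i j a \<eta>)"
  define H where "H = cinner \<eta> (\<sigma> j i (astar a) \<xi>)"
  define d1 where "d1 = cinner \<xi> (\<sigma> i i 1 \<xi>)"
  define d2 where "d2 = cinner \<eta> (\<sigma> j j (astar a * a) \<eta>)"
  have sc: "\<sigma> p q x (scaleC c v) = scaleC c (\<sigma> p q x v)" if "p \<in> {1..n}" "q \<in> {1..n}" for p q x c v
    using bop_scale[OF cnpos_bop[OF cp that]] .
  have Q: "Qf \<sigma> 2 (\<lambda>l. if l = 0 then i else j) (\<lambda>l. if l = 0 then 1 else a)
             (\<lambda>l. if l = 0 then \<xi> else scaleC c \<eta>) = d1 + c * G + (cnj c * H + cnj c * c * d2)" for c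
    unfolding Qf2 G_def H_def d1_def d2_def using ij by (simp add: sc mult.assoc cinner_scaleC_right)
  have g2: "Im (d1 + c * G + (cnj c * H + cnj c * c * d2)) = 0" for c
    using gram[OF cp, of 2 "\<lambda>l. if l = 0 then i else j" "\<lambda>l. if l = 0 then 1 else a"
        "\<lambda>l. if l = 0 then \<xi> else scaleC c \<eta>"] ij unfolding Q by auto
  have i1: "Im d1 = 0"
    using gram[OF cp, of 1 "\<lambda>l. i" "\<lambda>l. 1" "\<lambda>l. \<xi>"] ij unfolding Qf1 d1_def by auto
  have i2: "Im d2 = 0"
    using gram[OF cp, of 1 "\<lambda>l. j" "\<lambda>l. a" "\<lambda>l. \<eta>"] ij unfolding Qf1 d2_def by auto
  have e1: "Im G + Im H = 0" using g2[of 1] i1 i2 by simp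
  have e2: "Re G - Re H = 0" using g2[of \<i>] i1 i2 by simp
  have "G = cnj H" using e1 e2 by (simp add: complex_eq_iff)
  then show ?thesis unfolding G_def H_def .
qed
lemma cs_aux:
  fixes D G :: complex
  assumes "\<forall>c. 0 \<le> Re D + 2 * Re (c * G)"
  shows "G = 0"
proof (rule ccontr)
  assume G: "G \<noteq> 0"
  define s where "s = (Re G)\<^sup>2 + (Im G)\<^sup>2"
  have s: "s > 0" using G unfolding s_def by (simp add: complex_eq_iff sum_power2_gt_zero_iff)
  define r where "r = (\<bar>Re D\<bar> + 1) / s"
  have 1: "0 \<le> Re D + 2 * Re ((- complex_of_real r * cnj G) * G)" using assms by blast
  have 2: "Re ((- complex_of_real r * cnj G) * G) = - (r * s)"
    unfolding s_def by (simp add: power2_eq_square algebra_simps)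
  have 3: "r * s = \<bar>Re D\<bar> + 1" unfolding r_def using s by simp
  show False using 1 2 3 by linarith
qed

lemma null_orth:
  fixes \<sigma> :: "nat \<Rightarrow> nat \<Rightarrow> 'a::cstar_alg1 \<Rightarrow> 'h::chilbert \<Rightarrow> 'h"
  assumes cp: "cnpos P n \<sigma>" and ijk: "i \<in> {1..n}" "j \<in> {1..n}" "k \<in> {1..n}"
    and Q0: "Qf \<sigma> 2 (\<lambda>l. if l = 0 then j else i) (\<lambda>l. if l = 0 then 1 else w)
               (\<lambda>l. if l = 0 then \<xi> else scaleC (-1) \<xi>) = 0"
  shows "cinner \<eta> (\<sigma> k j b \<xi>) = cinner \<eta> (\<sigma> k i (b * w) \<xi>)"
proof -
  have sc: "\<sigma> p q x (scaleC c v) = scaleC c (\<sigma> p q x v)" if "p \<in> {1..n}" "q \<in> {1..n}" for p q x c v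
    using bop_scale[OF cnpos_bop[OF cp that]] .
  define g1 where "g1 = cinner \<eta> (\<sigma> k j b \<xi>)"
  define g2 where "g2 = cinner \<eta> (\<sigma> k i (b * w) \<xi>)"
  define D where "D = cinner \<eta> (\<sigma> k k (b * astar b) \<eta>)"
  have h1: "cinner \<xi> (\<sigma> j k (astar b) \<eta>) = cnj g1"
    unfolding g1_def using herm[OF cp ijk(2) ijk(3)] by (simp add: astar_astar)
  have h2: "cinner \<xi> (\<sigma> i k (astar w * astar b) \<eta>) = cnj g2"
    unfolding g2_def using herm[OF cp ijk(1) ijk(3)] by (simp add: astar_astar astar_mult)
  have Q0': "cinner \<xi> (\<sigma> j j 1 \<xi>) - cinner \<xi> (\<sigma> j i w \<xi>) - cinner \<xi> (\<sigma> i j (astar w) \<xi>)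
       + cinner \<xi> (\<sigma> i i (astar w * w) \<xi>) = 0"
    using Q0 unfolding Qf2 using ijk by (simp add: sc cinner_scaleC_right algebra_simps)
  have Q3: "Qf \<sigma> 3 (\<lambda>l. if l = 0 then k else if l = 1 then j else i)
              (\<lambda>l. if l = 0 then astar b else if l = 1 then 1 else w)
              (\<lambda>l. if l = 0 then \<eta> else if l = 1 then scaleC c \<xi> else scaleC (- c) \<xi>)
        = D + c * (g1 - g2) + cnj c * cnj (g1 - g2) + cnj c * c *
           (cinner \<xi> (\<sigma> j j 1 \<xi>) - cinner \<xi> (\<sigma> j i w \<xi>) - cinner \<xi> (\<sigma> i j (astar w) \<xi>)
       + cinner \<xi> (\<sigma> i i (astar w * w) \<xi>))" for c
    unfolding Qf3 D_def g1_def[symmetric] g2_def[symmetric] using ijk h1 h2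
    by (simp add: sc cinner_scaleC_right astar_astar g1_def g2_def algebra_simps)
  have "\<forall>c. 0 \<le> Re D + 2 * Re (c * (g1 - g2))"
  proof
    fix c
    have "0 \<le> Re (D + c * (g1 - g2) + cnj c * cnj (g1 - g2))"
      using gram[OF cp, of 3 "\<lambda>l. if l = 0 then k else if l = 1 then j else i"
         "\<lambda>l. if l = 0 then astar b else if l = 1 then 1 else w"
         "\<lambda>l. if l = 0 then \<eta> else if l = 1 then scaleC c \<xi> else scaleC (- c) \<xi>"] ijk
      unfolding Q3 Q0' by auto
    then show "0 \<le> Re D + 2 * Re (c * (g1 - g2))" by (simp add: algebra_simps)
  qed
  then have "g1 - g2 = 0" by (rule cs_aux)
  then show ?thesis unfolding g1_def g2_def by simp
qed
lemma Q0_expand: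
  fixes \<sigma> :: "nat \<Rightarrow> nat \<Rightarrow> 'a::cstar_alg1 \<Rightarrow> 'h::chilbert \<Rightarrow> 'h"
  assumes cp: "cnpos P n \<sigma>" and ij: "i \<in> {1..n}" "j \<in> {1..n}"
  shows "Qf \<sigma> 2 (\<lambda>l. if l = 0 then j else i) (\<lambda>l. if l = 0 then 1 else w)
               (\<lambda>l. if l = 0 then \<xi> else scaleC (-1) \<xi>) =
    cinner \<xi> (\<sigma> j j 1 \<xi>) - cinner \<xi> (\<sigma> j i w \<xi>) - cinner \<xi> (\<sigma> i j (astar w) \<xi>)
       + cinner \<xi> (\<sigma> i i (astar w * w) \<xi>)"
proof -
  have sc: "\<sigma> p q x (scaleC c v) = scaleC c (\<sigma> p q x v)" if "p \<in> {1..n}" "q \<in> {1..n}" for p q x c v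
    using bop_scale[OF cnpos_bop[OF cp that]] .
  show ?thesis unfolding Qf2 using ij by (simp add: sc cinner_scaleC_right algebra_simps)
qed

lemma Qf_diff: "Qf (\<lambda>i j a x. \<rho> i j a x - \<theta> i j a x) N I a \<xi> = Qf \<rho> N I a \<xi> - Qf \<theta> N I a \<xi>"
  unfolding Qf_def by (simp add: cinner_diff_right sum_subtractf)

lemma shift:
  fixes \<sigma> :: "nat \<Rightarrow> nat \<Rightarrow> 'a::cstar_alg1 \<Rightarrow> 'h::chilbert \<Rightarrow> 'h"
  assumes cp: "cnpos P n \<sigma>" and ijk: "i \<in> {1..n}" "j \<in> {1..n}" "k \<in> {1..n}"
    and Q0: "\<And>\<xi>. Qf \<sigma> 2 (\<lambda>l. if l = 0 then j else i) (\<lambda>l. if l = 0 then 1 else w)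
               (\<lambda>l. if l = 0 then \<xi> else scaleC (-1) \<xi>) = 0"
  shows "\<sigma> k j b = \<sigma> k i (b * w)"
proof
  fix \<xi>
  show "\<sigma> k j b \<xi> = \<sigma> k i (b * w) \<xi>"
    by (rule cinner_ext) (auto intro: null_orth[OF cp ijk Q0])
qed

theorem lemma4p1:
  fixes P :: "('a::cstar_alg1 \<Rightarrow> real) set"
    and n :: nat
    and \<rho> :: "nat \<Rightarrow> nat \<Rightarrow> 'a \<Rightarrow> 'h::chilbert \<Rightarrow> 'h"
    and u :: "nat \<Rightarrow> nat \<Rightarrow> 'a"
  assumes "pro_cstar P"
    and "cnpos P n \<rho>"
    and "\<forall>i\<in>{1..n}. pure_cp P (\<rho> i i) \<and> \<rho> i i 1 = id"
    and "\<forall>i\<in>{1..n}. \<forall>j\<in>{1..n}. cp_unit_equiv P TYPE('k::chilbert) (\<rho> i i) (\<rho> j j)"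
    and "\<forall>i\<in>{1..n}. \<forall>j\<in>{1..n}. i \<noteq> j \<longrightarrow> unitary_elem (u i j) \<and> \<rho> i j (u i j) = id"
  shows "pure_cnpos P n \<rho>"
  unfolding pure_cnpos_def
proof (intro conjI allI impI)
  have cp: "cnpos P n \<rho>" by fact
  then show "cnpos P n \<rho>" .
  have pure: "\<And>k. k \<in> {1..n} \<Longrightarrow> pure_cnpos P 1 (\<lambda>_ _. \<rho> k k)" and
       unit: "\<And>k. k \<in> {1..n} \<Longrightarrow> \<rho> k k 1 = id" using assms(3) by auto
  have uu: "\<And>i j. i \<in> {1..n} \<Longrightarrow> j \<in> {1..n} \<Longrightarrow> i \<noteq> j \<Longrightarrow> u i j * astar (u i j) = 1"
    and ru: "\<And>i j. i \<in> {1..n} \<Longrightarrow> j \<in> {1..n} \<Longrightarrow> i \<noteq> j \<Longrightarrow> \<rho> i j (u i j) = id"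
    using assms(5) unfolding unitary_elem_def by auto
  fix \<theta> :: "nat \<Rightarrow> nat \<Rightarrow> 'a \<Rightarrow> 'h \<Rightarrow> 'h"
  assume "cnpos P n \<theta> \<and> cnpos P n (\<lambda>i j a x. \<rho> i j a x - \<theta> i j a x)"
  then have tp: "cnpos P n \<theta>" and dp: "cnpos P n (\<lambda>i j a x. \<rho> i j a x - \<theta> i j a x)" by auto
  have Qr: "Qf \<rho> 2 (\<lambda>l. if l = 0 then j else i) (\<lambda>l. if l = 0 then 1 else astar (u i j))
               (\<lambda>l. if l = 0 then \<xi> else scaleC (-1) \<xi>) = 0"
    if ij: "i \<in> {1..n}" "j \<in> {1..n}" "i \<noteq> j" for i j \<xi>
  proof -
    have h: "cinner \<xi> (\<rho> j i (astar (u i j)) \<xi>) = cnj (cinner \<xi> (\<rho> i j (u i j) \<xi>))"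
      using herm[OF cp ij(2) ij(1)] by (simp add: astar_astar)
    have "cnj (cinner \<xi> \<xi>) = cinner \<xi> \<xi>" by (metis cinner_commute)
    then show ?thesis unfolding Q0_expand[OF cp ij(1) ij(2)] h
      using ij unit ru uu by (simp add: astar_astar)
  qed
  have Qt: "Qf \<theta> 2 (\<lambda>l. if l = 0 then j else i) (\<lambda>l. if l = 0 then 1 else astar (u i j))
               (\<lambda>l. if l = 0 then \<xi> else scaleC (-1) \<xi>) = 0"
    if ij: "i \<in> {1..n}" "j \<in> {1..n}" "i \<noteq> j" for i j \<xi>
  proof -
    let ?I = "\<lambda>l::nat. if l = 0 then j else i"
    let ?A = "\<lambda>l::nat. if l = 0 then 1 else astar (u i j)"
    let ?V = "\<lambda>l::nat. if l = 0 then \<xi> else scaleC (-1) \<xi>"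
    have I: "\<forall>l<2::nat. ?I l \<in> {1..n}" using ij by auto
    have 1: "0 \<le> Re (Qf \<theta> 2 ?I ?A ?V) \<and> Im (Qf \<theta> 2 ?I ?A ?V) = 0"
      by (rule gram[OF tp I])
    have 2: "0 \<le> Re (Qf (\<lambda>i j a x. \<rho> i j a x - \<theta> i j a x) 2 ?I ?A ?V)"
      using gram[OF dp I] by blast
    show ?thesis using 1 2 Qr[OF ij, of \<xi>] unfolding Qf_diff by (simp add: complex_eq_iff)
  qed
  have shr: "\<rho> k j b = \<rho> k i (b * astar (u i j))"
    if "i \<in> {1..n}" "j \<in> {1..n}" "k \<in> {1..n}" "i \<noteq> j" for i j k b
    using shift[OF cp that(1-3) Qr[OF that(1,2,4)]] .
  have sht: "\<theta> k j b = \<theta> k i (b * astar (u i j))"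
    if "i \<in> {1..n}" "j \<in> {1..n}" "k \<in> {1..n}" "i \<noteq> j" for i j k b
    using shift[OF tp that(1-3) Qt[OF that(1,2,4)]] .
  have "\<forall>k\<in>{1..n}. \<exists>\<alpha>::real. 0 \<le> \<alpha> \<and> \<alpha> \<le> 1 \<and>
          (\<forall>a. \<theta> k k a = (\<lambda>x. scaleC (complex_of_real \<alpha>) (\<rho> k k a x)))"
  proof
    fix k assume k: "k \<in> {1..n}"
    have c1: "cnpos P 1 (\<lambda>_ _. \<theta> k k)" by (rule cnpos_restrict[OF tp k])
    have c2: "cnpos P 1 (\<lambda>i j a x. \<rho> k k a x - (\<lambda>_ _. \<theta> k k) i j a x)"
      using cnpos_restrict[OF dp k] by simp
    have "\<forall>\<theta>'. cnpos P 1 \<theta>' \<and> cnpos P 1 (\<lambda>i j a x. \<rho> k k a x - \<theta>' i j a x) \<longrightarrow>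
        (\<exists>\<alpha>::real. 0 \<le> \<alpha> \<and> \<alpha> \<le> 1 \<and>
           (\<forall>i\<in>{1..1}. \<forall>j\<in>{1..1}. \<forall>a.
              \<theta>' i j a = (\<lambda>x. scaleC (complex_of_real \<alpha>) (\<rho> k k a x))))"
      using pure[OF k] unfolding pure_cnpos_def by (rule conjunct2)
    from mp[OF spec[OF this, of "\<lambda>_ _. \<theta> k k"] conjI[OF c1 c2]]
    show "\<exists>\<alpha>::real. 0 \<le> \<alpha> \<and> \<alpha> \<le> 1 \<and>
          (\<forall>a. \<theta> k k a = (\<lambda>x. scaleC (complex_of_real \<alpha>) (\<rho> k k a x)))" by simp
  qed
  then obtain al :: "nat \<Rightarrow> real" where al0: "\<forall>k\<in>{1..n}. 0 \<le> al k \<and> al k \<le> 1 \<and>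
          (\<forall>a. \<theta> k k a = (\<lambda>x. scaleC (complex_of_real (al k)) (\<rho> k k a x)))"
    by (rule bchoice[THEN exE])
  have al: "0 \<le> al k \<and> al k \<le> 1 \<and>
          (\<forall>a. \<theta> k k a = (\<lambda>x. scaleC (complex_of_real (al k)) (\<rho> k k a x)))" if "k \<in> {1..n}" for k
    using al0 that by blast
  have row: "\<theta> k j a = (\<lambda>x. scaleC (complex_of_real (al k)) (\<rho> k j a x))"
    if kj: "k \<in> {1..n}" "j \<in> {1..n}" for k j a
  proof (cases "k = j")
    case True then show ?thesis using al[OF kj(1)] by auto
  next
    case False
    have "\<theta> k j a = \<theta> k k (a * astar (u k j))" using sht[OF kj(1) kj(2) kj(1) False] .
    also have "\<dots> = (\<lambda>x. scaleC (complex_of_real (al k)) (\<rho> k k (a * astar (u k j)) x))"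
      using al[OF kj(1)] by auto
    also have "\<rho> k k (a * astar (u k j)) = \<rho> k j a" using shr[OF kj(1) kj(2) kj(1) False] by simp
    finally show ?thesis .
  qed
  show "\<exists>\<alpha>::real. 0 \<le> \<alpha> \<and> \<alpha> \<le> 1 \<and> (\<forall>i\<in>{1..n}. \<forall>j\<in>{1..n}. \<forall>a.
              \<theta> i j a = (\<lambda>x. scaleC (complex_of_real \<alpha>) (\<rho> i j a x)))"
  proof (cases "\<exists>\<xi>0::'h. \<xi>0 \<noteq> 0")
    case False
    then have z: "\<And>x::'h. x = 0" by blast
    have triv: "\<And>x y::'h. x = y"
    proof -
      fix x y :: 'h
      have "x = 0" "y = 0" by (rule z)+
      then show "x = y" by simp
    qed
    show ?thesis
      by (rule exI[of _ 0]) (intro conjI ballI allI ext triv, simp_all)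
  next
    case True
    then obtain \<xi>0 :: 'h where x0: "\<xi>0 \<noteq> 0" by blast
    have nz: "cinner \<xi>0 \<xi>0 \<noteq> 0" using x0 cinner_eq_zero by blast
    have aleq: "al k = al j" if kj: "k \<in> {1..n}" "j \<in> {1..n}" "k \<noteq> j" for k j
    proof -
      let ?c = "u j k"
      have "cinner \<xi>0 (\<theta> j k ?c \<xi>0) = cnj (cinner \<xi>0 (\<theta> k j (astar ?c) \<xi>0))"
        by (rule herm[OF tp kj(2) kj(1)])
      also have "\<dots> = complex_of_real (al k) * cnj (cinner \<xi>0 (\<rho> k j (astar ?c) \<xi>0))"
        using row[OF kj(1) kj(2)] by (simp add: cinner_scaleC_right)
      also have "cnj (cinner \<xi>0 (\<rho> k j (astar ?c) \<xi>0)) = cinner \<xi>0 (\<rho> j k ?c \<xi>0)"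
        using herm[OF cp kj(2) kj(1), of \<xi>0 ?c \<xi>0] by simp
      also have "\<rho> j k ?c = id" using ru kj by auto
      finally have e1: "cinner \<xi>0 (\<theta> j k ?c \<xi>0) = complex_of_real (al k) * cinner \<xi>0 \<xi>0" by simp
      have e2: "cinner \<xi>0 (\<theta> j k ?c \<xi>0) = complex_of_real (al j) * cinner \<xi>0 \<xi>0"
        using row[OF kj(2) kj(1)] ru[OF kj(2) kj(1)] kj by (simp add: cinner_scaleC_right)
      from e1 e2 nz have "complex_of_real (al k) = complex_of_real (al j)" by simp
      then show ?thesis by simp
    qed
    have n1: "1 \<le> n" if "i \<in> {1..n}" for i using that by auto
    show ?thesis
    proof (cases "n = 0")
      case True then show ?thesis by (intro exI[of _ 0]) auto
    next
      case False
      then have one: "1 \<in> {1..n}" by auto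
      show ?thesis
      proof (intro exI[of _ "al 1"] conjI ballI allI)
        show "0 \<le> al 1" "al 1 \<le> 1" using al[OF one] by auto
        fix i j a assume ij: "i \<in> {1..n}" "j \<in> {1..n}"
        have "al i = al 1" using aleq[OF ij(1) one] by (cases "i = 1") auto
        then show "\<theta> i j a = (\<lambda>x. scaleC (complex_of_real (al 1)) (\<rho> i j a x))"
          using row[OF ij] by simp
      qed
    qed
  qed
qed

end
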